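(* Let $\mathbf X\sim\mathrm E_n(\boldsymbol\mu,\Sigma,\tau)$ with $\Sigma$ invertible, let $\alpha\in(0,1/2)$, and let $\boldsymbol\sigma=(\sigma_1,\dots,\sigma_n)^\top$ with $\sigma_i=\sqrt{\sigma_{ii}}$. Then the maximization problem $\max_{\mathbf w\in\Delta_n}\mathbf w^\top\boldsymbol\sigma/\sqrt{\mathbf w^\top\Sigma\mathbf w}$ has a solution, and any maximizer $\mathbf w^*$ satisfies $$\mathrm{DQ}^{\rho}_\alpha(\mathbf w^*\odot\mathbf X)=\min_{\mathbf w\in\Delta_n}\mathrm{DQ}^{\rho}_\alpha(\mathbf w\odot\mathbf X)$$ for $\rho=\mathrm{VaR}$, and also for $\rho=\mathrm{ES}$ provided $Y\sim\mathrm E_1(0,1,\tau)$ satisfies $\mathbb E|Y|<\infty$.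
   Context: Let $(\Omega,\mathcal F,\mathbb P)$ be an atomless probability space. For $\alpha\in[0,1)$ and a random variable $X$, $\mathrm{VaR}_\alpha(X)=\inf\{x\in\mathbb R:\mathbb P(X\le x)\ge 1-\alpha\}$; for $\alpha\in(0,1)$ and integrable $X$, $\mathrm{ES}_\alpha(X)=\frac1\alpha\int_0^\alpha\mathrm{VaR}_\beta(X)\,\mathrm d\beta$. For $\rho\in\{\mathrm{VaR},\mathrm{ES}\}$, $\alpha\in(0,1)$ and $\mathbf X=(X_1,\dots,X_n)$ (integrable components when $\rho=\mathrm{ES}$), $\mathrm{DQ}^\rho_\alpha(\mathbf X)=\alpha^*/\alpha$, where $\alpha^*=\inf\{\beta\in(0,1):\rho_\beta(\sum_{i=1}^nX_i)\le\sum_{i=1}^n\rho_\alpha(X_i)\}$, with $\inf\emptyset=1$. A random vector $\mathbf X$ in $\mathbb R^n$ has elliptical distribution $\mathrm E_n(\boldsymbol\mu,\Sigma,\tau)$, with $\boldsymbol\mu\in\mathbb R^n$, $\Sigma=(\sigma_{ij})$ positive semi-definite and nonzero, and $\tau:[0,\infty)\to\mathbb R$, if $\mathbb E[\exp(\mathrm i\,\mathbf t^\top\mathbf X)]=\exp(\mathrm i\,\mathbf t^\top\boldsymbol\mu)\,\tau(\mathbf t^\top\Sigma\mathbf t)$ for all $\mathbf t\in\mathbb R^n$. $\Delta_n=\{\mathbf x\in[0,1]^n:x_1+\dots+x_n=1\}$, and for $\mathbf w\in\Delta_n$, $\mathbf w\odot\mathbf X=(w_1X_1,\dots,w_nX_n)$.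 *)

theory Defs
  imports "HOL-Probability.Probability" "HOL-Analysis.Analysis"
begin

definition atomless :: "'a measure \<Rightarrow> bool" where
  "atomless M \<longleftrightarrow> (\<forall>A\<in>sets M. measure M A > 0 \<longrightarrow>
      (\<exists>B\<in>sets M. B \<subseteq> A \<and> 0 < measure M B \<and> measure M B < measure M A))"

definition VaR :: "'a measure \<Rightarrow> real \<Rightarrow> ('a \<Rightarrow> real) \<Rightarrow> real" where
  "VaR M \<alpha> X = Inf {x. measure M {\<omega>\<in>space M. X \<omega> \<le> x} \<ge> 1 - \<alpha>}"

definition ES :: "'a measure \<Rightarrow> real \<Rightarrow> ('a \<Rightarrow> real) \<Rightarrow> real" where
  "ES M \<alpha> X = (1 / \<alpha>) * (LBINT \<beta>=0..\<alpha>. VaR M \<beta> X)"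

definition alpha_star :: "(real \<Rightarrow> ('a \<Rightarrow> real) \<Rightarrow> real) \<Rightarrow> real \<Rightarrow> ('n::finite \<Rightarrow> 'a \<Rightarrow> real) \<Rightarrow> real" where
  "alpha_star \<rho> \<alpha> Xs =
     (let S = {\<beta>\<in>{0<..<1}. \<rho> \<beta> (\<lambda>\<omega>. \<Sum>i\<in>UNIV. Xs i \<omega>) \<le> (\<Sum>i\<in>UNIV. \<rho> \<alpha> (Xs i))}
      in if S = {} then 1 else Inf S)"

definition DQ :: "(real \<Rightarrow> ('a \<Rightarrow> real) \<Rightarrow> real) \<Rightarrow> real \<Rightarrow> ('n::finite \<Rightarrow> 'a \<Rightarrow> real) \<Rightarrow> real" where
  "DQ \<rho> \<alpha> Xs = alpha_star \<rho> \<alpha> Xs / \<alpha>"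

definition elliptical :: "'a measure \<Rightarrow> ('a \<Rightarrow> real^'n) \<Rightarrow> real^'n \<Rightarrow> real^'n^'n \<Rightarrow> (real \<Rightarrow> real) \<Rightarrow> bool" where
  "elliptical M X \<mu> \<Sigma> \<tau> \<longleftrightarrow>
     X \<in> borel_measurable M \<and>
     transpose \<Sigma> = \<Sigma> \<and> (\<forall>x. 0 \<le> x \<bullet> (\<Sigma> *v x)) \<and> \<Sigma> \<noteq> 0 \<and>
     (\<forall>t. (CLINT \<omega>|M. cis (t \<bullet> X \<omega>)) = cis (t \<bullet> \<mu>) * complex_of_real (\<tau> (t \<bullet> (\<Sigma> *v t))))"

definition elliptical1_std :: "'a measure \<Rightarrow> ('a \<Rightarrow> real) \<Rightarrow> (real \<Rightarrow> real) \<Rightarrow> bool" where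
  "elliptical1_std M Y \<tau> \<longleftrightarrow>
     Y \<in> borel_measurable M \<and>
     (\<forall>t::real. (CLINT \<omega>|M. cis (t * Y \<omega>)) = complex_of_real (\<tau> (t * t)))"

definition Delta_simplex :: "(real^'n) set" where
  "Delta_simplex = {w. (\<forall>i. 0 \<le> w $ i) \<and> (\<Sum>i\<in>UNIV. w $ i) = 1}"

definition wprod :: "real^'n \<Rightarrow> ('a \<Rightarrow> real^'n) \<Rightarrow> ('n \<Rightarrow> 'a \<Rightarrow> real)" where
  "wprod w X = (\<lambda>i \<omega>. w $ i * X \<omega> $ i)"

definition sigma_vec :: "real^'n^'n \<Rightarrow> real^'n" where
  "sigma_vec \<Sigma> = (\<chi> i. sqrt (\<Sigma> $ i $ i))"

definition div_ratio :: "real^'n^'n \<Rightarrow> real^'n \<Rightarrow> real" where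
  "div_ratio \<Sigma> w = (w \<bullet> sigma_vec \<Sigma>) / sqrt (w \<bullet> (\<Sigma> *v w))"

end

theory Submission
  imports Defs
begin


lemma (in prob_space) VaR_distr:
  assumes "f \<in> borel_measurable M"
  shows "VaR M \<beta> f = Inf {x. 1 - \<beta> \<le> cdf (distr M borel f) x}"
proof -
  have "\<And>x. cdf (distr M borel f) x = measure M {\<omega>\<in>space M. f \<omega> \<le> x}"
    unfolding cdf_def using assms by (subst measure_distr) (auto intro!: arg_cong[where f="measure M"])
  then show ?thesis unfolding VaR_def by simp
qed

lemma quantile_set:
  assumes D: "real_distribution D" and b: "0 < \<beta>" "\<beta> < 1"
  shows "{x. 1 - \<beta> \<le> cdf D x} = {Inf {x. 1 - \<beta> \<le> cdf D x}..}"
proof -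
  interpret real_distribution D by fact
  define S where "S = {x. 1 - \<beta> \<le> cdf D x}"
  have "\<forall>\<^sub>F x in at_top. 1 - \<beta> < cdf D x"
    using order_tendstoD(1)[OF cdf_lim_at_top_prob] b by simp
  then obtain x0 where "1 - \<beta> \<le> cdf D x0" by (metis eventually_at_top_linorder order_le_less order_refl)
  then have ne: "S \<noteq> {}" unfolding S_def by auto
  have "\<forall>\<^sub>F x in at_bot. cdf D x < 1 - \<beta>"
    using order_tendstoD(2)[OF cdf_lim_at_bot] b by simp
  then obtain b0 where b0: "\<And>x. x \<le> b0 \<Longrightarrow> cdf D x < 1 - \<beta>" by (auto simp: eventually_at_bot_linorder)
  have bdd: "bdd_below S" unfolding S_def bdd_below_def
    by (rule exI[of _ b0]) (metis b0 linorder_not_le mem_Collect_eq order_less_imp_le)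
  have up: "y \<in> S" if "x \<in> S" "x \<le> y" for x y
    using that cdf_nondecreasing unfolding S_def by (auto intro: order_trans)
  have gt: "y \<in> S" if lt: "Inf S < y" for y
  proof -
    obtain x where "x \<in> S" "x < y" using cInf_less_iff[OF ne bdd, of y] lt by auto
    then show ?thesis using up by auto
  qed
  have "Inf S \<in> S"
  proof -
    have "(cdf D \<longlongrightarrow> cdf D (Inf S)) (at_right (Inf S))"
      using cdf_is_right_cont by (simp add: continuous_within)
    moreover have "\<forall>\<^sub>F x in at_right (Inf S). 1 - \<beta> \<le> cdf D x"
    proof -
      have "\<forall>y. Inf S < y \<longrightarrow> 1 - \<beta> \<le> cdf D y" using gt by (auto simp: S_def)
      then show ?thesis unfolding eventually_at_right_field
        by (intro exI[of _ "Inf S + 1"]) auto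
    qed
    ultimately have "1 - \<beta> \<le> cdf D (Inf S)"
      by (rule tendsto_lowerbound) simp
    then show ?thesis unfolding S_def by simp
  qed
  then have "S = {Inf S..}" using up cInf_lower[OF _ bdd] by auto
  then show ?thesis unfolding S_def .
qed

lemma (in prob_space) VaR_set:
  assumes f: "f \<in> borel_measurable M" and b: "0 < \<beta>" "\<beta> < 1"
  shows "{x. 1 - \<beta> \<le> measure M {\<omega>\<in>space M. f \<omega> \<le> x}} = {VaR M \<beta> f..}"
proof -
  have c: "\<And>x. cdf (distr M borel f) x = measure M {\<omega>\<in>space M. f \<omega> \<le> x}"
    unfolding cdf_def using f by (subst measure_distr) (auto intro!: arg_cong[where f="measure M"])
  show ?thesis
    using quantile_set[OF real_distribution_distr[OF f] b] unfolding VaR_distr[OF f] c by simp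
qed

lemma (in prob_space) VaR_le_iff:
  assumes f: "f \<in> borel_measurable M" and b: "0 < \<beta>" "\<beta> < 1"
  shows "VaR M \<beta> f \<le> x \<longleftrightarrow> 1 - \<beta> \<le> measure M {\<omega>\<in>space M. f \<omega> \<le> x}"
  using VaR_set[OF assms] by (auto simp: set_eq_iff)

lemma (in prob_space) VaR_affine:
  assumes f: "f \<in> borel_measurable M" and b: "0 < \<beta>" "\<beta> < 1" and s: "0 < s"
  shows "VaR M \<beta> (\<lambda>\<omega>. a + s * f \<omega>) = a + s * VaR M \<beta> f"
proof -
  have "\<And>x. {\<omega>\<in>space M. a + s * f \<omega> \<le> x} = {\<omega>\<in>space M. f \<omega> \<le> (x - a) / s}"
    using s by (auto simp: field_simps)
  then have "{x. 1 - \<beta> \<le> measure M {\<omega>\<in>space M. a + s * f \<omega> \<le> x}} = {x. VaR M \<beta> f \<le> (x - a) / s}"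
    using VaR_le_iff[OF f b] by simp
  also have "\<dots> = {a + s * VaR M \<beta> f..}" using s by (auto simp: field_simps)
  finally show ?thesis unfolding VaR_def by simp
qed

lemma (in prob_space) VaR_const:
  assumes b: "0 < \<beta>" "\<beta> < 1"
  shows "VaR M \<beta> (\<lambda>\<omega>. c) = c"
proof -
  have "{x. 1 - \<beta> \<le> measure M {\<omega>\<in>space M. c \<le> x}} = {c..}"
  proof -
    have "\<And>x. {\<omega>\<in>space M. c \<le> x} = (if c \<le> x then space M else {})" by auto
    then show ?thesis using b prob_space by auto
  qed
  then show ?thesis unfolding VaR_def by simp
qed




lemma quad_aux: fixes a b :: real assumes b: "0 \<le> b" and h: "\<And>t. 0 \<le> 2*t*a + t*t*b" shows "a = 0"
proof -
  define c where "c = b + 1"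
  have c: "0 < c" using b c_def by simp
  define t where "t = -a/c"
  have tc: "t * c = -a" using c unfolding t_def by simp
  have "c*c*(2*t*a + t*t*b) = 2*(t*c)*a*c + (t*c)*(t*c)*b" by (simp add: algebra_simps)
  also have "\<dots> = - (a*a*(b+2))" unfolding tc by (simp add: c_def algebra_simps)
  finally have e: "c*c*(2*t*a + t*t*b) = - (a*a*(b+2))" .
  have "0 \<le> c*c*(2*t*a + t*t*b)" using h[of t] c by simp
  then have "a*a*(b+2) \<le> 0" using e by linarith
  moreover have "0 \<le> a*a*(b+2)" using b by simp
  ultimately have "a*a = 0" using b by (metis add_nonneg_pos mult_eq_0_iff order_antisym_conv zero_less_numeral not_less)
  then show ?thesis by simp
qed

lemma psd_pd:
  fixes S :: "real^'n^'n"
  assumes sym: "transpose S = S" and psd: "\<forall>x. 0 \<le> x \<bullet> (S *v x)" and inv: "invertible S"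
    and x: "x \<noteq> 0"
  shows "0 < x \<bullet> (S *v x)"
proof (rule ccontr)
  assume "\<not> 0 < x \<bullet> (S *v x)"
  then have x0: "x \<bullet> (S *v x) = 0" using psd[rule_format, of x] by linarith
  have symm: "a \<bullet> (S *v b) = b \<bullet> (S *v a)" for a b
    by (metis dot_lmul_matrix inner_commute sym transpose_matrix_vector)
  have yz: "y \<bullet> (S *v x) = 0" for y
  proof (rule quad_aux)
    show "0 \<le> y \<bullet> (S *v y)" using psd by simp
    fix t
    have "0 \<le> (x + t *\<^sub>R y) \<bullet> (S *v (x + t *\<^sub>R y))" using psd by blast
    also have "\<dots> = x \<bullet> (S *v x) + t * (y \<bullet> (S *v x)) + t * (x \<bullet> (S *v y)) + t * t * (y \<bullet> (S *v y))"
      by (simp add: matrix_vector_right_distrib inner_add_left inner_add_right matrix_vector_mult_scaleR algebra_simps)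
    also have "\<dots> = 2 * t * (y \<bullet> (S *v x)) + t * t * (y \<bullet> (S *v y))" using x0 symm[of x y] by simp
    finally show "0 \<le> 2 * t * (y \<bullet> (S *v x)) + t * t * (y \<bullet> (S *v y))" .
  qed
  have "S *v x = 0" using yz[of "S *v x"] by simp
  moreover obtain B where "B ** S = mat 1" using inv unfolding invertible_def by blast
  ultimately have "x = 0" by (metis matrix_vector_mul_assoc matrix_vector_mul_lid matrix_vector_mult_0_right)
  then show False using x by simp
qed

locale ell = prob_space M for M :: "'a measure" +
  fixes X :: "'a \<Rightarrow> real^'n::finite" and \<mu> :: "real^'n" and \<Sigma> :: "real^'n^'n" and \<tau> :: "real \<Rightarrow> real"
  assumes ell: "elliptical M X \<mu> \<Sigma> \<tau>" and inv: "invertible \<Sigma>"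
begin

lemma Xm[measurable]: "X \<in> borel_measurable M" using ell unfolding elliptical_def by simp

lemma pd: "x \<noteq> 0 \<Longrightarrow> 0 < x \<bullet> (\<Sigma> *v x)"
  using ell inv psd_pd unfolding elliptical_def by blast

lemma charX: "(CLINT \<omega>|M. cis (t \<bullet> X \<omega>)) = cis (t \<bullet> \<mu>) * complex_of_real (\<tau> (t \<bullet> (\<Sigma> *v t)))"
  using ell unfolding elliptical_def by blast

definition Y :: "real^'n \<Rightarrow> 'a \<Rightarrow> real" where
  "Y u \<omega> = (u \<bullet> X \<omega> - u \<bullet> \<mu>) / sqrt (u \<bullet> (\<Sigma> *v u))"

lemma Ym[measurable]: "Y u \<in> borel_measurable M" unfolding Y_def by measurable

lemma charY:
  assumes u: "u \<noteq> 0"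
  shows "(CLINT \<omega>|M. cis (t * Y u \<omega>)) = complex_of_real (\<tau> (t * t))"
proof -
  define s where "s = sqrt (u \<bullet> (\<Sigma> *v u))"
  have s: "0 < s" using pd[OF u] s_def by simp
  define v where "v = (t / s) *\<^sub>R u"
  have e: "t * Y u \<omega> = v \<bullet> X \<omega> - v \<bullet> \<mu>" for \<omega>
    unfolding Y_def v_def s_def[symmetric] using s by (simp add: field_simps inner_diff_right)
  have vv: "v \<bullet> (\<Sigma> *v v) = t * t"
  proof -
    have "v \<bullet> (\<Sigma> *v v) = (t/s)^2 * (u \<bullet> (\<Sigma> *v u))"
      unfolding v_def by (simp add: matrix_vector_mult_scaleR power2_eq_square)
    also have "u \<bullet> (\<Sigma> *v u) = s^2" unfolding s_def using pd[OF u] by simp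
    finally show ?thesis using s by (simp add: field_simps power2_eq_square)
  qed
  have "(CLINT \<omega>|M. cis (t * Y u \<omega>)) = (CLINT \<omega>|M. cis (v \<bullet> X \<omega>) * cis (- (v \<bullet> \<mu>)))"
    unfolding e by (simp add: cis_mult)
  also have "\<dots> = cis (v \<bullet> \<mu>) * complex_of_real (\<tau> (t * t)) * cis (- (v \<bullet> \<mu>))"
    by (simp add: charX vv)
  also have "\<dots> = complex_of_real (\<tau> (t * t))"
    by (simp add: mult.commute mult.left_commute cis_mult)
  finally show ?thesis .
qed

lemma char_distrY:
  assumes u: "u \<noteq> 0"
  shows "char (distr M borel (Y u)) = (\<lambda>t. complex_of_real (\<tau> (t * t)))"
proof
  fix t
  have "char (distr M borel (Y u)) t = (CLINT \<omega>|M. iexp (t * Y u \<omega>))"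
    unfolding char_def by (subst integral_distr) auto
  also have "\<dots> = (CLINT \<omega>|M. cis (t * Y u \<omega>))" by (simp add: cis_conv_exp)
  finally show "char (distr M borel (Y u)) t = complex_of_real (\<tau> (t * t))" using charY[OF u] by simp
qed

lemma distrY_eq:
  assumes "u \<noteq> 0" "v \<noteq> 0"
  shows "distr M borel (Y u) = distr M borel (Y v)"
  by (rule Levy_uniqueness) (auto simp: char_distrY assms)

lemma VaR_Y_eq:
  assumes "u \<noteq> 0" "v \<noteq> 0"
  shows "VaR M \<beta> (Y u) = VaR M \<beta> (Y v)"
  using distrY_eq[OF assms] by (simp add: VaR_distr)

end



lemma alpha_star_mono:
  fixes \<rho> :: "real \<Rightarrow> ('a \<Rightarrow> real) \<Rightarrow> real" and Xw Xv :: "'n::finite \<Rightarrow> 'a \<Rightarrow> real"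
  assumes w1: "\<And>\<beta>. \<beta> \<in> {0<..<1} \<Longrightarrow> \<rho> \<beta> (\<lambda>\<omega>. \<Sum>i\<in>UNIV. Xw i \<omega>) = c1 + s1 * R \<beta>"
    and w2: "(\<Sum>i\<in>UNIV. \<rho> \<alpha> (Xw i)) = c1 + d1 * R \<alpha>"
    and v1: "\<And>\<beta>. \<beta> \<in> {0<..<1} \<Longrightarrow> \<rho> \<beta> (\<lambda>\<omega>. \<Sum>i\<in>UNIV. Xv i \<omega>) = c2 + s2 * R \<beta>"
    and v2: "(\<Sum>i\<in>UNIV. \<rho> \<alpha> (Xv i)) = c2 + d2 * R \<alpha>"
    and s1: "0 < s1" and s2: "0 < s2" and r: "d2 / s2 \<le> d1 / s1" and R: "0 \<le> R \<alpha>"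
  shows "alpha_star \<rho> \<alpha> Xw \<le> alpha_star \<rho> \<alpha> Xv"
proof -
  define Sw where "Sw = {\<beta>\<in>{0<..<1}. \<rho> \<beta> (\<lambda>\<omega>. \<Sum>i\<in>UNIV. Xw i \<omega>) \<le> (\<Sum>i\<in>UNIV. \<rho> \<alpha> (Xw i))}"
  define Sv where "Sv = {\<beta>\<in>{0<..<1}. \<rho> \<beta> (\<lambda>\<omega>. \<Sum>i\<in>UNIV. Xv i \<omega>) \<le> (\<Sum>i\<in>UNIV. \<rho> \<alpha> (Xv i))}"
  have sub: "Sv \<subseteq> Sw"
  proof
    fix \<beta> assume "\<beta> \<in> Sv"
    then have b: "\<beta> \<in> {0<..<1}" and "s2 * R \<beta> \<le> d2 * R \<alpha>" using v1 v2 unfolding Sv_def by auto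
    then have "R \<beta> \<le> (d2 / s2) * R \<alpha>" using s2 by (simp add: field_simps)
    also have "\<dots> \<le> (d1 / s1) * R \<alpha>" using r R by (rule mult_right_mono)
    finally have "s1 * R \<beta> \<le> d1 * R \<alpha>" using s1 by (simp add: field_simps)
    then show "\<beta> \<in> Sw" using b w1 w2 unfolding Sw_def by auto
  qed
  have bdd: "bdd_below Sw" unfolding Sw_def bdd_below_def by (rule exI[of _ 0]) auto
  have le1: "Inf Sw \<le> 1" if ne: "Sw \<noteq> {}"
  proof -
    obtain x where "x \<in> Sw" using ne by auto
    then have "Inf Sw \<le> x" "x < 1" using cInf_lower[OF _ bdd] unfolding Sw_def by auto
    then show ?thesis by simp
  qed
  have "(if Sw = {} then 1 else Inf Sw) \<le> (if Sv = {} then 1 else Inf Sv)"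
  proof (cases "Sv = {}")
    case True then show ?thesis using le1 by auto
  next
    case False
    then have "Sw \<noteq> {}" using sub by auto
    then show ?thesis using False cInf_superset_mono[OF False bdd sub] by simp
  qed
  then show ?thesis unfolding alpha_star_def Let_def Sw_def Sv_def .
qed

lemma DQ_mono:
  fixes \<rho> :: "real \<Rightarrow> ('a \<Rightarrow> real) \<Rightarrow> real" and Xw Xv :: "'n::finite \<Rightarrow> 'a \<Rightarrow> real"
  assumes "alpha_star \<rho> \<alpha> Xw \<le> alpha_star \<rho> \<alpha> Xv" "0 < \<alpha>"
  shows "DQ \<rho> \<alpha> Xw \<le> DQ \<rho> \<alpha> Xv"
  using assms unfolding DQ_def by (simp add: divide_right_mono)

lemma (in prob_space) cdf_distr_eq:
  fixes f :: "'a \<Rightarrow> real"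
  assumes "f \<in> borel_measurable M"
  shows "measure (distr M borel f) {..x} = measure M {\<omega>\<in>space M. f \<omega> \<le> x}"
  using assms by (subst measure_distr) (auto intro!: arg_cong[where f="measure M"] borel_closed closed_atMost)

context ell begin

definition "i0 = (undefined :: 'n)"
definition Q :: "real \<Rightarrow> real" where "Q \<beta> = VaR M \<beta> (Y (axis i0 1))"
definition sd :: "real^'n \<Rightarrow> real" where "sd u = sqrt (u \<bullet> (\<Sigma> *v u))"

lemma sd_pos: "u \<noteq> 0 \<Longrightarrow> 0 < sd u" unfolding sd_def using pd by simp

lemma Q_eq: "u \<noteq> 0 \<Longrightarrow> VaR M \<beta> (Y u) = Q \<beta>"
  unfolding Q_def by (rule VaR_Y_eq) (auto simp: axis_eq_0_iff)

lemma Y_neg: "Y (-u) \<omega> = - Y u \<omega>"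
proof -
  have "\<Sigma> *v (-u) = - (\<Sigma> *v u)"
    using matrix_vector_mult_scaleR[of \<Sigma> "-1" u] by simp
  then show ?thesis unfolding Y_def by simp (metis minus_diff_eq minus_divide_left)
qed

end


context ell begin

lemma u0_nz: "axis i0 1 \<noteq> (0::real^'n)" by (simp add: axis_eq_0_iff)

lemma Q_nonneg:
  assumes b: "0 < \<beta>" "\<beta> < 1/2"
  shows "0 \<le> Q \<beta>"
proof (rule ccontr)
  assume "\<not> 0 \<le> Q \<beta>"
  then have q: "Q \<beta> < 0" by simp
  define u where "u = (axis i0 1 :: real^'n)"
  define q where "q = Q \<beta>"
  have u: "u \<noteq> 0" "-u \<noteq> 0" unfolding u_def using u0_nz by auto
  have "VaR M \<beta> (Y u) \<in> {x. 1 - \<beta> \<le> measure M {\<omega>\<in>space M. Y u \<omega> \<le> x}}"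
    using VaR_set[OF Ym, of \<beta> u] b by simp
  then have A: "1 - \<beta> \<le> measure M {\<omega>\<in>space M. Y u \<omega> \<le> q}"
    unfolding q_def Q_def u_def by simp
  have "measure M {\<omega>\<in>space M. Y (-u) \<omega> \<le> q} = measure M {\<omega>\<in>space M. Y u \<omega> \<le> q}"
    using cdf_distr_eq[OF Ym, of "-u" q] cdf_distr_eq[OF Ym, of u q] distrY_eq[OF u(2) u(1)] by simp
  moreover have "{\<omega>\<in>space M. Y (-u) \<omega> \<le> q} = {\<omega>\<in>space M. - q \<le> Y u \<omega>}"
    by (auto simp: Y_neg)
  ultimately have B: "1 - \<beta> \<le> measure M {\<omega>\<in>space M. - q \<le> Y u \<omega>}" using A by simp
  have "measure M ({\<omega>\<in>space M. Y u \<omega> \<le> q} \<union> {\<omega>\<in>space M. - q \<le> Y u \<omega>})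
      = measure M {\<omega>\<in>space M. Y u \<omega> \<le> q} + measure M {\<omega>\<in>space M. - q \<le> Y u \<omega>}"
    using q unfolding q_def by (intro finite_measure_Union) auto
  moreover have "measure M ({\<omega>\<in>space M. Y u \<omega> \<le> q} \<union> {\<omega>\<in>space M. - q \<le> Y u \<omega>}) \<le> 1"
    by (rule prob_le_1)
  ultimately show False using A B b by linarith
qed

lemma ax_X: "axis i 1 \<bullet> v = v $ i" for v :: "real^'n"
  by (simp add: inner_axis inner_commute)

lemma mv_axis: "(\<Sigma> *v axis i 1) $ i = \<Sigma> $ i $ i"
  by (simp add: matrix_vector_mult_def axis_def if_distrib cong: if_cong)

lemma ax_S: "axis i 1 \<bullet> (\<Sigma> *v axis i 1) = \<Sigma> $ i $ i"
  by (simp add: ax_X mv_axis)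

lemma sig_pos: "0 < \<Sigma> $ i $ i"
  using pd[of "axis i 1"] by (simp add: ax_S axis_eq_0_iff)

lemma X_comp: "X \<omega> $ i = \<mu> $ i + sqrt (\<Sigma> $ i $ i) * Y (axis i 1) \<omega>"
  using sig_pos[of i] unfolding Y_def by (simp add: ax_X ax_S mv_axis)

lemma comp_VaR:
  assumes w: "0 \<le> w $ i" and b: "0 < \<beta>" "\<beta> < 1"
  shows "VaR M \<beta> (wprod w X i) = w $ i * \<mu> $ i + w $ i * sqrt (\<Sigma> $ i $ i) * Q \<beta>"
proof (cases "w $ i = 0")
  case True
  then have "wprod w X i = (\<lambda>\<omega>. 0)" unfolding wprod_def by simp
  then show ?thesis using True VaR_const[OF b] by simp
next
  case False
  then have pos: "0 < w $ i * sqrt (\<Sigma> $ i $ i)" using w sig_pos[of i] by simp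
  have "wprod w X i = (\<lambda>\<omega>. w $ i * \<mu> $ i + (w $ i * sqrt (\<Sigma> $ i $ i)) * Y (axis i 1) \<omega>)"
    unfolding wprod_def by (simp add: X_comp algebra_simps)
  then show ?thesis using VaR_affine[OF Ym b pos] Q_eq[of "axis i 1"] by (simp add: axis_eq_0_iff)
qed

lemma sum_eq: "w \<noteq> 0 \<Longrightarrow> (\<lambda>\<omega>. \<Sum>i\<in>UNIV. wprod w X i \<omega>) = (\<lambda>\<omega>. w \<bullet> \<mu> + sd w * Y w \<omega>)"
  using sd_pos[of w] unfolding wprod_def Y_def sd_def by (simp add: inner_vec_def)

lemma sum_VaR:
  assumes w: "w \<noteq> 0" and b: "0 < \<beta>" "\<beta> < 1"
  shows "VaR M \<beta> (\<lambda>\<omega>. \<Sum>i\<in>UNIV. wprod w X i \<omega>) = w \<bullet> \<mu> + sd w * Q \<beta>"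
  unfolding sum_eq[OF w] using VaR_affine[OF Ym b sd_pos[OF w]] Q_eq[OF w] by simp

lemma simplex_nz: "w \<in> Delta_simplex \<Longrightarrow> w \<noteq> 0"
  unfolding Delta_simplex_def by auto

lemma sum_comp:
  fixes g :: "real \<Rightarrow> real"
  shows "(\<Sum>i\<in>UNIV. w $ i * \<mu> $ i + w $ i * sqrt (\<Sigma> $ i $ i) * g a) = w \<bullet> \<mu> + (w \<bullet> sigma_vec \<Sigma>) * g a"
  unfolding inner_vec_def sigma_vec_def by (simp add: sum.distrib sum_distrib_right)

lemma sum_comp_VaR:
  assumes w: "w \<in> Delta_simplex" and b: "0 < \<beta>" "\<beta> < 1"
  shows "(\<Sum>i\<in>UNIV. VaR M \<beta> (wprod w X i)) = w \<bullet> \<mu> + (w \<bullet> sigma_vec \<Sigma>) * Q \<beta>"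
proof -
  have "(\<Sum>i\<in>UNIV. VaR M \<beta> (wprod w X i)) = (\<Sum>i\<in>UNIV. w $ i * \<mu> $ i + w $ i * sqrt (\<Sigma> $ i $ i) * Q \<beta>)"
    using w b by (intro sum.cong refl comp_VaR) (auto simp: Delta_simplex_def)
  then show ?thesis using sum_comp[of w Q \<beta>] by simp
qed

end



lemma Delta_compact: "compact (Delta_simplex :: (real^'n::finite) set)"
proof (subst compact_eq_bounded_closed, intro conjI)
  have "Delta_simplex \<subseteq> cball (0::real^'n) 1"
  proof
    fix w :: "real^'n" assume w: "w \<in> Delta_simplex"
    have "norm w \<le> (\<Sum>i\<in>UNIV. \<bar>w $ i\<bar>)" by (rule norm_le_l1_cart)
    also have "\<dots> = 1" using w unfolding Delta_simplex_def by simp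
    finally show "w \<in> cball 0 1" by simp
  qed
  then show "bounded (Delta_simplex :: (real^'n) set)" using bounded_subset bounded_cball by blast
  have "Delta_simplex = {w::real^'n. \<forall>i. 0 \<le> w $ i} \<inter> {w. (\<Sum>i\<in>UNIV. w $ i) = 1}"
    unfolding Delta_simplex_def by auto
  moreover have "closed {w::real^'n. \<forall>i. 0 \<le> w $ i}"
    by (intro closed_Collect_all closed_Collect_le continuous_intros)
  moreover have "closed {w::real^'n. (\<Sum>i\<in>UNIV. w $ i) = 1}"
    by (intro closed_Collect_eq continuous_intros)
  ultimately show "closed (Delta_simplex :: (real^'n) set)" by (metis closed_Int)
qed

lemma Delta_ne: "(Delta_simplex :: (real^'n::finite) set) \<noteq> {}"
proof -
  have "(\<chi> i. 1 / real CARD('n)) \<in> (Delta_simplex :: (real^'n) set)"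
    unfolding Delta_simplex_def by simp
  then show ?thesis by auto
qed

context ell begin

lemma div_ratio_eq: "div_ratio \<Sigma> w = (w \<bullet> sigma_vec \<Sigma>) / sd w"
  unfolding div_ratio_def sd_def ..

lemma cont_div: "continuous_on Delta_simplex (div_ratio \<Sigma>)"
proof -
  have c: "continuous_on Delta_simplex (\<lambda>x. \<Sigma> *v x)"
    using matrix_vector_mult_linear_continuous_on[of Delta_simplex \<Sigma>] by simp
  have nz: "\<forall>x\<in>Delta_simplex. sqrt (x \<bullet> (\<Sigma> *v x)) \<noteq> 0"
    using pd simplex_nz by (metis less_numeral_extra(3) real_sqrt_eq_zero_cancel_iff)
  show ?thesis unfolding div_ratio_def
    by (intro continuous_intros c nz)
qed

lemma exists_max: "\<exists>w\<in>Delta_simplex. \<forall>v\<in>Delta_simplex. div_ratio \<Sigma> v \<le> div_ratio \<Sigma> w"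
  using continuous_attains_sup[OF Delta_compact Delta_ne cont_div] by blast

lemma VaR_result:
  assumes w: "w \<in> Delta_simplex" and wmax: "\<forall>v\<in>Delta_simplex. div_ratio \<Sigma> v \<le> div_ratio \<Sigma> w"
    and v: "v \<in> Delta_simplex" and a: "0 < \<alpha>" "\<alpha> < 1/2"
  shows "DQ (VaR M) \<alpha> (wprod w X) \<le> DQ (VaR M) \<alpha> (wprod v X)"
proof (rule DQ_mono[OF _ a(1)], rule alpha_star_mono[where R=Q])
  show "VaR M \<beta> (\<lambda>\<omega>. \<Sum>i\<in>UNIV. wprod w X i \<omega>) = w \<bullet> \<mu> + sd w * Q \<beta>" if "\<beta> \<in> {0<..<1}" for \<beta>
    using sum_VaR[OF simplex_nz[OF w]] that by simp
  show "VaR M \<beta> (\<lambda>\<omega>. \<Sum>i\<in>UNIV. wprod v X i \<omega>) = v \<bullet> \<mu> + sd v * Q \<beta>" if "\<beta> \<in> {0<..<1}" for \<beta>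
    using sum_VaR[OF simplex_nz[OF v]] that by simp
  show "(\<Sum>i\<in>UNIV. VaR M \<alpha> (wprod w X i)) = w \<bullet> \<mu> + (w \<bullet> sigma_vec \<Sigma>) * Q \<alpha>"
    using sum_comp_VaR[OF w] a by simp
  show "(\<Sum>i\<in>UNIV. VaR M \<alpha> (wprod v X i)) = v \<bullet> \<mu> + (v \<bullet> sigma_vec \<Sigma>) * Q \<alpha>"
    using sum_comp_VaR[OF v] a by simp
  show "0 < sd w" "0 < sd v" using sd_pos simplex_nz w v by auto
  show "(v \<bullet> sigma_vec \<Sigma>) / sd v \<le> (w \<bullet> sigma_vec \<Sigma>) / sd w"
    using wmax v by (simp add: div_ratio_eq)
  show "0 \<le> Q \<alpha>" using Q_nonneg a by simp
qed

end


context ell begin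

abbreviation "Y0 \<equiv> Y (axis i0 1)"
definition F0 :: "real \<Rightarrow> real" where "F0 x = measure M {\<omega>\<in>space M. Y0 \<omega> \<le> x}"

lemma Q_le_iff: "0 < \<gamma> \<Longrightarrow> \<gamma> < 1 \<Longrightarrow> Q \<gamma> \<le> x \<longleftrightarrow> 1 - \<gamma> \<le> F0 x"
  unfolding Q_def F0_def by (rule VaR_le_iff[OF Ym])

lemma Q_anti: "0 < g1 \<Longrightarrow> g1 \<le> g2 \<Longrightarrow> g2 < 1 \<Longrightarrow> Q g2 \<le> Q g1"
  using Q_le_iff[of g1 "Q g1"] Q_le_iff[of g2 "Q g1"] by auto

definition Qt :: "real \<Rightarrow> real" where "Qt \<gamma> = (if \<gamma> \<in> {0<..<1} then Q \<gamma> else 0)"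

lemma Qt_meas[measurable]: "Qt \<in> borel_measurable borel"
proof (subst borel_measurable_iff_le, intro allI)
  fix a
  have "{w \<in> space borel. Qt w \<le> a} = ({0<..<1} \<inter> {1 - F0 a..}) \<union> (if 0 \<le> a then - {0<..<1} else {})"
    using Q_le_iff by (auto simp: Qt_def)
  also have "\<dots> \<in> sets borel" by auto
  finally show "{w \<in> space borel. Qt w \<le> a} \<in> sets borel" .
qed

lemma F0_le1: "F0 x \<le> 1" unfolding F0_def by (rule prob_le_1)

lemma Q_int_low:
  assumes int: "integrable M (\<lambda>\<omega>. \<bar>Y0 \<omega>\<bar>)"
  shows "set_integrable lborel {0<..<1/4} Qt"
proof -
  define c :: real where "c = 1/4"
  define f1 where "f1 \<gamma> = (if \<gamma> \<in> {0<..<c} then nat \<lceil>Qt \<gamma>\<rceil> else 0)" for \<gamma>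
  define f2 where "f2 \<omega> = nat \<lceil>Y0 \<omega>\<rceil>" for \<omega>
  have f1m: "f1 \<in> measurable lborel (count_space UNIV)" unfolding f1_def by measurable
  have f2m: "f2 \<in> measurable M (count_space UNIV)" unfolding f2_def by measurable
  have C: "emeasure lborel {\<gamma>\<in>space lborel. t < f1 \<gamma>} \<le> emeasure M {\<omega>\<in>space M. t < f2 \<omega>}" for t
  proof -
    have "{\<gamma>\<in>space lborel. t < f1 \<gamma>} \<subseteq> {0<..<1 - F0 t}"
    proof
      fix \<gamma> assume "\<gamma> \<in> {\<gamma>\<in>space lborel. t < f1 \<gamma>}"
      then have g: "\<gamma> \<in> {0<..<c}" "t < nat \<lceil>Q \<gamma>\<rceil>" unfolding f1_def Qt_def c_def
        by (auto split: if_splits)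
      then have "real t < Q \<gamma>" by linarith
      then have "\<not> 1 - \<gamma> \<le> F0 (real t)" using Q_le_iff[of \<gamma> "real t"] g(1) unfolding c_def by auto
      then show "\<gamma> \<in> {0<..<1 - F0 t}" using g(1) by auto
    qed
    then have "emeasure lborel {\<gamma>\<in>space lborel. t < f1 \<gamma>} \<le> emeasure lborel {0<..<1 - F0 t}"
      by (intro emeasure_mono) auto
    also have "\<dots> = ennreal (1 - F0 t)" using F0_le1[of t] by simp
    also have "1 - F0 t = measure M {\<omega>\<in>space M. t < Y0 \<omega>}"
    proof -
      have "space M - {\<omega>\<in>space M. Y0 \<omega> \<le> t} = {\<omega>\<in>space M. t < Y0 \<omega>}" by auto
      moreover have "{\<omega>\<in>space M. Y0 \<omega> \<le> t} \<in> events" by measurable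
      ultimately show ?thesis unfolding F0_def using prob_compl by metis
    qed
    also have "ennreal \<dots> = emeasure M {\<omega>\<in>space M. t < Y0 \<omega>}" by (simp add: emeasure_eq_measure)
    also have "{\<omega>\<in>space M. t < Y0 \<omega>} = {\<omega>\<in>space M. t < f2 \<omega>}"
      unfolding f2_def by (auto, linarith+)
    finally show ?thesis .
  qed
  have "(\<integral>\<^sup>+\<gamma>. of_nat (f1 \<gamma>) \<partial>lborel) = (\<Sum>t. emeasure lborel {\<gamma>\<in>space lborel. t < f1 \<gamma>})"
    by (rule nn_integral_nat_function[OF f1m])
  also have "\<dots> \<le> (\<Sum>t. emeasure M {\<omega>\<in>space M. t < f2 \<omega>})"
    by (intro suminf_le C) auto
  also have "\<dots> = (\<integral>\<^sup>+\<omega>. of_nat (f2 \<omega>) \<partial>M)"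
    by (rule nn_integral_nat_function[OF f2m, symmetric])
  also have "\<dots> \<le> (\<integral>\<^sup>+\<omega>. ennreal (\<bar>Y0 \<omega>\<bar>) + 1 \<partial>M)"
  proof (intro nn_integral_mono)
    fix \<omega>
    have "real (f2 \<omega>) \<le> \<bar>Y0 \<omega>\<bar> + 1" unfolding f2_def by linarith
    then show "of_nat (f2 \<omega>) \<le> ennreal (\<bar>Y0 \<omega>\<bar>) + 1"
      by (metis ennreal_le_iff ennreal_of_nat_eq_real_of_nat ennreal_plus abs_ge_zero zero_le_one add_nonneg_nonneg ennreal_1)
  qed
  also have "\<dots> = (\<integral>\<^sup>+\<omega>. ennreal (\<bar>Y0 \<omega>\<bar>) \<partial>M) + 1"
    by (subst nn_integral_add) (auto simp: emeasure_space_1)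
  also have "\<dots> < \<infinity>" using integrableD(2)[OF int] by (simp add: less_top)
  finally have fin: "(\<integral>\<^sup>+\<gamma>. of_nat (f1 \<gamma>) \<partial>lborel) < \<infinity>" .
  have "integrable lborel (\<lambda>\<gamma>. indicator {0<..<c} \<gamma> *\<^sub>R Qt \<gamma>)"
  proof (rule integrableI_bounded)
    show "(\<lambda>\<gamma>. indicator {0<..<c} \<gamma> *\<^sub>R Qt \<gamma>) \<in> borel_measurable lborel" by measurable
    have "(\<integral>\<^sup>+\<gamma>. ennreal (norm (indicator {0<..<c} \<gamma> *\<^sub>R Qt \<gamma>)) \<partial>lborel) \<le> (\<integral>\<^sup>+\<gamma>. of_nat (f1 \<gamma>) \<partial>lborel)"
    proof (intro nn_integral_mono)
      fix \<gamma>
      show "ennreal (norm (indicator {0<..<c} \<gamma> *\<^sub>R Qt \<gamma>)) \<le> of_nat (f1 \<gamma>)"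
      proof (cases "\<gamma> \<in> {0<..<c}")
        case True
        then have q: "0 \<le> Q \<gamma>" "Qt \<gamma> = Q \<gamma>" using Q_nonneg unfolding Qt_def c_def by auto
        then have "norm (indicator {0<..<c} \<gamma> *\<^sub>R Qt \<gamma>) \<le> real (f1 \<gamma>)"
          using True unfolding f1_def by simp
        then show ?thesis by (simp add: ennreal_of_nat_eq_real_of_nat ennreal_leI)
      qed simp
    qed
    then show "(\<integral>\<^sup>+\<gamma>. ennreal (norm (indicator {0<..<c} \<gamma> *\<^sub>R Qt \<gamma>)) \<partial>lborel) < \<infinity>"
      using fin by (rule le_less_trans)
  qed
  then show ?thesis unfolding set_integrable_def c_def .
qed

end


context ell begin

lemma Q_int:
  assumes int: "integrable M (\<lambda>\<omega>. \<bar>Y0 \<omega>\<bar>)" and b: "0 < \<beta>" "\<beta> < 1"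
  shows "set_integrable lborel {0<..<\<beta>} Qt"
proof (cases "\<beta> \<le> 1/4")
  case True
  show ?thesis by (rule set_integrable_subset[OF Q_int_low[OF int]]) (use True in auto)
next
  case False
  have hi: "set_integrable lborel {1/4..<\<beta>} Qt"
    unfolding set_integrable_def
  proof (rule integrableI_bounded_set[where A="{1/4..<\<beta>}" and B="max \<bar>Q \<beta>\<bar> \<bar>Q (1/4)\<bar>"])
    show "emeasure lborel {1/4..<\<beta>} < \<infinity>" using False by simp
    show "AE x in lborel. x \<in> {1/4..<\<beta>} \<longrightarrow> norm (indicator {1/4..<\<beta>} x *\<^sub>R Qt x) \<le> max \<bar>Q \<beta>\<bar> \<bar>Q (1/4)\<bar>"
    proof (rule AE_I2, rule impI)
      fix x assume x: "x \<in> {1/4..<\<beta>}"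
      then have "Q \<beta> \<le> Q x" "Q x \<le> Q (1/4)" "Qt x = Q x"
        using Q_anti[of x \<beta>] Q_anti[of "1/4" x] b unfolding Qt_def by auto
      then show "norm (indicator {1/4..<\<beta>} x *\<^sub>R Qt x) \<le> max \<bar>Q \<beta>\<bar> \<bar>Q (1/4)\<bar>"
        using x by auto
    qed
  qed auto
  have "{0<..<\<beta>} = {0<..<1/4} \<union> {1/4..<\<beta>}" using False by auto
  then show ?thesis using set_integrable_Un[OF Q_int_low[OF int] hi] by simp
qed

definition Eq :: "real \<Rightarrow> real" where "Eq \<beta> = (1 / \<beta>) * (LINT \<gamma>:{0<..<\<beta>}|lborel. Qt \<gamma>)"

lemma Eq_nonneg:
  assumes b: "0 < \<beta>" "\<beta> < 1/2" shows "0 \<le> Eq \<beta>"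
proof -
  have "0 \<le> indicator {0<..<\<beta>} x *\<^sub>R Qt x" for x
    using Q_nonneg[of x] b by (auto simp: indicator_def Qt_def)
  then have "0 \<le> (LINT \<gamma>:{0<..<\<beta>}|lborel. Qt \<gamma>)"
    unfolding set_lebesgue_integral_def by (intro Bochner_Integration.integral_nonneg) auto
  then show ?thesis unfolding Eq_def using b by simp
qed

lemma ES_affine:
  assumes int: "integrable M (\<lambda>\<omega>. \<bar>Y0 \<omega>\<bar>)" and b: "0 < \<beta>" "\<beta> < 1"
    and h: "\<And>\<gamma>. 0 < \<gamma> \<Longrightarrow> \<gamma> < 1 \<Longrightarrow> VaR M \<gamma> f = a + s * Q \<gamma>"
  shows "ES M \<beta> f = a + s * Eq \<beta>"
proof -
  have "ES M \<beta> f = (1 / \<beta>) * (LINT \<gamma>:{0<..<\<beta>}|lborel. VaR M \<gamma> f)"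
    unfolding ES_def interval_lebesgue_integral_def using b by (simp add: zero_ereal_def)
  also have "(LINT \<gamma>:{0<..<\<beta>}|lborel. VaR M \<gamma> f) = (LINT \<gamma>:{0<..<\<beta>}|lborel. a + s * Qt \<gamma>)"
    using b h by (intro set_lebesgue_integral_cong) (auto simp: Qt_def)
  also have "\<dots> = (LINT \<gamma>:{0<..<\<beta>}|lborel. a) + (LINT \<gamma>:{0<..<\<beta>}|lborel. s * Qt \<gamma>)"
  proof (rule set_integral_add(2))
    show "set_integrable lborel {0<..<\<beta>} (\<lambda>\<gamma>. a)"
      unfolding set_integrable_def using b
      by (intro integrable_scaleR_left integrable_real_indicator) auto
    show "set_integrable lborel {0<..<\<beta>} (\<lambda>\<gamma>. s * Qt \<gamma>)"
      using Q_int[OF int b] by auto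
  qed
  also have "(LINT \<gamma>:{0<..<\<beta>}|lborel. a) = \<beta> * a"
    using b by (subst set_integral_const) (auto simp: measure_def)
  finally show ?thesis using b unfolding Eq_def by (simp add: field_simps)
qed

lemma comp_ES:
  assumes int: "integrable M (\<lambda>\<omega>. \<bar>Y0 \<omega>\<bar>)" and w: "0 \<le> w $ i" and b: "0 < \<beta>" "\<beta> < 1"
  shows "ES M \<beta> (wprod w X i) = w $ i * \<mu> $ i + w $ i * sqrt (\<Sigma> $ i $ i) * Eq \<beta>"
  using ES_affine[OF int b, of "wprod w X i" "w $ i * \<mu> $ i" "w $ i * sqrt (\<Sigma> $ i $ i)"] comp_VaR[OF w]
  by simp

lemma sum_ES:
  assumes int: "integrable M (\<lambda>\<omega>. \<bar>Y0 \<omega>\<bar>)" and w: "w \<noteq> 0" and b: "0 < \<beta>" "\<beta> < 1"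
  shows "ES M \<beta> (\<lambda>\<omega>. \<Sum>i\<in>UNIV. wprod w X i \<omega>) = w \<bullet> \<mu> + sd w * Eq \<beta>"
  using ES_affine[OF int b] sum_VaR[OF w] by simp

lemma sum_comp_ES:
  assumes int: "integrable M (\<lambda>\<omega>. \<bar>Y0 \<omega>\<bar>)" and w: "w \<in> Delta_simplex" and b: "0 < \<beta>" "\<beta> < 1"
  shows "(\<Sum>i\<in>UNIV. ES M \<beta> (wprod w X i)) = w \<bullet> \<mu> + (w \<bullet> sigma_vec \<Sigma>) * Eq \<beta>"
proof -
  have "(\<Sum>i\<in>UNIV. ES M \<beta> (wprod w X i)) = (\<Sum>i\<in>UNIV. w $ i * \<mu> $ i + w $ i * sqrt (\<Sigma> $ i $ i) * Eq \<beta>)"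
    using w b by (intro sum.cong refl comp_ES[OF int]) (auto simp: Delta_simplex_def)
  then show ?thesis using sum_comp[of w Eq \<beta>] by simp
qed

lemma ES_result:
  assumes int: "integrable M (\<lambda>\<omega>. \<bar>Y0 \<omega>\<bar>)"
    and w: "w \<in> Delta_simplex" and wmax: "\<forall>v\<in>Delta_simplex. div_ratio \<Sigma> v \<le> div_ratio \<Sigma> w"
    and v: "v \<in> Delta_simplex" and a: "0 < \<alpha>" "\<alpha> < 1/2"
  shows "DQ (ES M) \<alpha> (wprod w X) \<le> DQ (ES M) \<alpha> (wprod v X)"
proof (rule DQ_mono[OF _ a(1)], rule alpha_star_mono[where R=Eq])
  show "ES M \<beta> (\<lambda>\<omega>. \<Sum>i\<in>UNIV. wprod w X i \<omega>) = w \<bullet> \<mu> + sd w * Eq \<beta>" if "\<beta> \<in> {0<..<1}" for \<beta>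
    using sum_ES[OF int simplex_nz[OF w]] that by simp
  show "ES M \<beta> (\<lambda>\<omega>. \<Sum>i\<in>UNIV. wprod v X i \<omega>) = v \<bullet> \<mu> + sd v * Eq \<beta>" if "\<beta> \<in> {0<..<1}" for \<beta>
    using sum_ES[OF int simplex_nz[OF v]] that by simp
  show "(\<Sum>i\<in>UNIV. ES M \<alpha> (wprod w X i)) = w \<bullet> \<mu> + (w \<bullet> sigma_vec \<Sigma>) * Eq \<alpha>"
    using sum_comp_ES[OF int w] a by simp
  show "(\<Sum>i\<in>UNIV. ES M \<alpha> (wprod v X i)) = v \<bullet> \<mu> + (v \<bullet> sigma_vec \<Sigma>) * Eq \<alpha>"
    using sum_comp_ES[OF int v] a by simp
  show "0 < sd w" "0 < sd v" using sd_pos simplex_nz w v by auto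
  show "(v \<bullet> sigma_vec \<Sigma>) / sd v \<le> (w \<bullet> sigma_vec \<Sigma>) / sd w"
    using wmax v by (simp add: div_ratio_eq)
  show "0 \<le> Eq \<alpha>" using Eq_nonneg a by simp
qed

lemma Y0_ell: "elliptical1_std M Y0 \<tau>"
  unfolding elliptical1_std_def using charY[OF u0_nz] by simp

end


theorem theorem3:
  fixes M :: "'a measure" and X :: "'a \<Rightarrow> real^'n"
    and \<mu> :: "real^'n" and \<Sigma> :: "real^'n^'n" and \<tau> :: "real \<Rightarrow> real" and \<alpha> :: real
  assumes "prob_space M" and "atomless M"
    and "elliptical M X \<mu> \<Sigma> \<tau>" and "invertible \<Sigma>"
    and "0 < \<alpha>" and "\<alpha> < 1/2"
  shows "(\<exists>w\<in>Delta_simplex. \<forall>v\<in>Delta_simplex. div_ratio \<Sigma> v \<le> div_ratio \<Sigma> w)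
    \<and> (\<forall>w\<in>Delta_simplex. (\<forall>v\<in>Delta_simplex. div_ratio \<Sigma> v \<le> div_ratio \<Sigma> w) \<longrightarrow>
          (\<forall>v\<in>Delta_simplex. DQ (VaR M) \<alpha> (wprod w X) \<le> DQ (VaR M) \<alpha> (wprod v X)))
    \<and> ((\<forall>Y. elliptical1_std M Y \<tau> \<longrightarrow> integrable M (\<lambda>\<omega>. \<bar>Y \<omega>\<bar>)) \<longrightarrow>
       (\<forall>w\<in>Delta_simplex. (\<forall>v\<in>Delta_simplex. div_ratio \<Sigma> v \<le> div_ratio \<Sigma> w) \<longrightarrow>
          (\<forall>v\<in>Delta_simplex. DQ (ES M) \<alpha> (wprod w X) \<le> DQ (ES M) \<alpha> (wprod v X))))"
proof -
  interpret e: ell M X \<mu> \<Sigma> \<tau>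
    by (intro ell.intro ell_axioms.intro) (use assms in auto)
  have 1: "\<exists>w\<in>Delta_simplex. \<forall>v\<in>Delta_simplex. div_ratio \<Sigma> v \<le> div_ratio \<Sigma> w"
    by (rule e.exists_max)
  have 2: "\<forall>w\<in>Delta_simplex. (\<forall>v\<in>Delta_simplex. div_ratio \<Sigma> v \<le> div_ratio \<Sigma> w) \<longrightarrow>
          (\<forall>v\<in>Delta_simplex. DQ (VaR M) \<alpha> (wprod w X) \<le> DQ (VaR M) \<alpha> (wprod v X))"
    using e.VaR_result assms(5,6) by blast
  have 3: "(\<forall>Y. elliptical1_std M Y \<tau> \<longrightarrow> integrable M (\<lambda>\<omega>. \<bar>Y \<omega>\<bar>)) \<longrightarrow>
       (\<forall>w\<in>Delta_simplex. (\<forall>v\<in>Delta_simplex. div_ratio \<Sigma> v \<le> div_ratio \<Sigma> w) \<longrightarrow>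
          (\<forall>v\<in>Delta_simplex. DQ (ES M) \<alpha> (wprod w X) \<le> DQ (ES M) \<alpha> (wprod v X)))"
  proof (intro impI)
    assume h: "\<forall>Y. elliptical1_std M Y \<tau> \<longrightarrow> integrable M (\<lambda>\<omega>. \<bar>Y \<omega>\<bar>)"
    have int: "integrable M (\<lambda>\<omega>. \<bar>e.Y0 \<omega>\<bar>)" using h e.Y0_ell by blast
    show "\<forall>w\<in>Delta_simplex. (\<forall>v\<in>Delta_simplex. div_ratio \<Sigma> v \<le> div_ratio \<Sigma> w) \<longrightarrow>
          (\<forall>v\<in>Delta_simplex. DQ (ES M) \<alpha> (wprod w X) \<le> DQ (ES M) \<alpha> (wprod v X))"
      using e.ES_result[OF int] assms(5,6) by blast
  qed
  show ?thesis using 1 2 3 by blast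
qed

end
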